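(* Let $W$ be a complex vector space, $\phi(x,z)$ an associate of the additive formal group, and $(a_i(x),b_i(x))$ ($i=1,\dots,n$) $\phi$-quasi compatible ordered pairs in $\mathcal{E}(W)$. Suppose that $$\sum_{i=1}^ng_i(x_1,x_2)a_i(x_1)b_i(x_2)\in\mathrm{Hom}(W,W((x_1,x_2)))$$ with $g_1,\dots,g_n\in\mathbb{C}((x_1,x_2))$. Then $$\sum_{i=1}^ng_i(\phi(x,z),x)Y^\phi_{\mathcal{E}}(a_i(x),z)b_i(x)=\Big(\sum_{i=1}^ng_i(x_1,x)a_i(x_1)b_i(x)\Big)\Big|_{x_1=\phi(x,z)}.$$
   Context: $\mathcal{E}(W)=\mathrm{Hom}(W,W((x)))$; $\mathbb{C}((x_1,x_2))=\mathbb{C}[[x_1,x_2]][x_1^{-1},x_2^{-1}]$. An associate is $\phi(x,z)\in\mathbb{C}((x))[[z]]$ with $\phi(x,0)=x$ and $\phi(\phi(x,x_2),x_0)=\phi(x,x_0+x_2)$. For $g\in\mathbb{C}((x_1,x_2))$, $g(\phi(x,z),x)\in\mathbb{C}((x))[[z]]$ is the substitution $x_1=\phi(x,z),x_2=x$ (negative powers of $\phi$ taken in $\mathbb{C}((x))[[z]]$); similarly for elements of $\mathrm{Hom}(W,W((x_1,x_2)))$. A pair $(a(x),b(x))$ is $\phi$-quasi compatible if $p(x_1,x_2)a(x_1)b(x_2)\in\mathrm{Hom}(W,W((x_1,x_2)))$ for some $p\in\mathbb{C}[[x,y]]$ with $p(\phi(x,z),x)\ne0$; then $Y^\phi_{\mathcal{E}}(a(x),z)b(x):=p(\phi(x,z),x)^{-1}(p(x_1,x)a(x_1)b(x))|_{x_1=\phi(x,z)}\in\mathcal{E}(W)((z))$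 (inverse in $\mathbb{C}((x))((z))$; independent of $p$). *)

theory Defs
  imports "HOL-Computational_Algebra.Formal_Laurent_Series"
begin

text \<open>W is a complex vector space: a type 'w with scalar multiplication sc, assumed
  to satisfy vector_space sc.
  C((x))[[z]] = complex fls fps, C((x))((z)) = complex fls fls (library types).
  W-valued formal series are represented by coefficient functions:
  a(x) in E(W) = Hom(W,W((x))) is a :: int => 'w => 'w, a(x) = sum_n (a n) x^n;
  F in Hom(W,W((x1,x2))) is F :: int => int => 'w => 'w, coefficient of x1^m x2^n;
  an element of Hom(W,W((x))((z))) (or of E(W)((z))) is S :: int => int => 'w => 'w,
  S k p = coefficient of z^k x^p.
  Scalar two-variable series g in C((x1,x2)) are g :: int => int => complex.\<close>

text \<open>Sum of a function over its (finite) support; all sums below are finite.\<close>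
definition fsum :: "('i \<Rightarrow> 'a::comm_monoid_add) \<Rightarrow> 'a" where
  "fsum f = sum f {i. f i \<noteq> 0}"

definition EW :: "(complex \<Rightarrow> 'w::ab_group_add \<Rightarrow> 'w) \<Rightarrow> (int \<Rightarrow> 'w \<Rightarrow> 'w) \<Rightarrow> bool" where
  "EW sc a \<longleftrightarrow> (\<forall>n. Vector_Spaces.linear sc sc (a n)) \<and> (\<forall>w. \<exists>N. \<forall>n<N. a n w = 0)"

text \<open>the values of F lie in W((x1,x2)) = W[[x1,x2]][x1^-1,x2^-1]\<close>
definition trunc2 :: "(int \<Rightarrow> int \<Rightarrow> 'w \<Rightarrow> 'w::zero) \<Rightarrow> bool" where
  "trunc2 F \<longleftrightarrow> (\<forall>w. \<exists>N. \<forall>m n. m < N \<or> n < N \<longrightarrow> F m n w = 0)"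

text \<open>g in C((x1,x2)) = C[[x1,x2]][x1^-1,x2^-1]\<close>
definition laur2 :: "(int \<Rightarrow> int \<Rightarrow> complex) \<Rightarrow> bool" where
  "laur2 g \<longleftrightarrow> (\<exists>N. \<forall>m n. m < N \<or> n < N \<longrightarrow> g m n = 0)"

definition pow2 :: "(int \<Rightarrow> int \<Rightarrow> complex) \<Rightarrow> bool" where
  "pow2 p \<longleftrightarrow> (\<forall>m n. m < 0 \<or> n < 0 \<longrightarrow> p m n = 0)"

definition prod12 :: "(int \<Rightarrow> 'w \<Rightarrow> 'w) \<Rightarrow> (int \<Rightarrow> 'w \<Rightarrow> 'w) \<Rightarrow> int \<Rightarrow> int \<Rightarrow> 'w \<Rightarrow> 'w" where
  "prod12 a b m n w = a m (b n w)"

definition mult2 :: "(complex \<Rightarrow> 'w::ab_group_add \<Rightarrow> 'w) \<Rightarrow> (int \<Rightarrow> int \<Rightarrow> complex)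
    \<Rightarrow> (int \<Rightarrow> int \<Rightarrow> 'w \<Rightarrow> 'w) \<Rightarrow> int \<Rightarrow> int \<Rightarrow> 'w \<Rightarrow> 'w" where
  "mult2 sc g F m n w = fsum (\<lambda>(i, j). sc (g i j) (F (m - i) (n - j) w))"

text \<open>coefficient of z^k x^p in phi(x,z)^m (integer power taken in C((x))[[z]])\<close>
definition phipow :: "complex fls fps \<Rightarrow> int \<Rightarrow> nat \<Rightarrow> int \<Rightarrow> complex" where
  "phipow \<phi> m k p = fls_nth (fps_nth (\<phi> powi m) k) p"

text \<open>associate of the additive formal group:
  phi(x,0) = x and phi(phi(x,x2),x0) = phi(x,x0+x2), compared coefficientwise
  at x0^i x2^j x^p.  The left side is sum_k phi_k(phi(x,x2)) x0^k, where
  phi_k(phi(x,x2)) = sum_m [x^m]phi_k * phi(x,x2)^m.\<close>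
definition associate :: "complex fls fps \<Rightarrow> bool" where
  "associate \<phi> \<longleftrightarrow> fps_nth \<phi> 0 = fls_X \<and>
     (\<forall>i j p. fsum (\<lambda>m. fls_nth (fps_nth \<phi> i) m * phipow \<phi> m j p)
              = of_nat ((i + j) choose j) * fls_nth (fps_nth \<phi> (i + j)) p)"

text \<open>g(phi(x,z),x) in C((x))[[z]], as coefficient function (z^k x^p)\<close>
definition substC :: "complex fls fps \<Rightarrow> (int \<Rightarrow> int \<Rightarrow> complex) \<Rightarrow> int \<Rightarrow> int \<Rightarrow> complex" where
  "substC \<phi> g k p = (if k < 0 then 0 else fsum (\<lambda>(m, n). phipow \<phi> m (nat k) (p - n) * g m n))"

text \<open>F(phi(x,z),x) for F in Hom(W,W((x1,x2))), i.e. set x2 = x and x1 = phi(x,z)\<close>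
definition substW :: "(complex \<Rightarrow> 'w::ab_group_add \<Rightarrow> 'w) \<Rightarrow> complex fls fps
    \<Rightarrow> (int \<Rightarrow> int \<Rightarrow> 'w \<Rightarrow> 'w) \<Rightarrow> int \<Rightarrow> int \<Rightarrow> 'w \<Rightarrow> 'w" where
  "substW sc \<phi> F k p w = (if k < 0 then 0 else fsum (\<lambda>(m, n). sc (phipow \<phi> m (nat k) (p - n)) (F m n w)))"

definition multZ :: "(complex \<Rightarrow> 'w::ab_group_add \<Rightarrow> 'w) \<Rightarrow> (int \<Rightarrow> int \<Rightarrow> complex)
    \<Rightarrow> (int \<Rightarrow> int \<Rightarrow> 'w \<Rightarrow> 'w) \<Rightarrow> int \<Rightarrow> int \<Rightarrow> 'w \<Rightarrow> 'w" where
  "multZ sc c S k p w = fsum (\<lambda>(l, q). sc (c l q) (S (k - l) (p - q) w))"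

definition to_flsfps :: "(int \<Rightarrow> int \<Rightarrow> complex) \<Rightarrow> complex fls fps" where
  "to_flsfps c = Abs_fps (\<lambda>k. Abs_fls (\<lambda>q. c (int k) q))"

text \<open>p(phi(x,z),x)^-1, inverse taken in C((x))((z)), as coefficient function\<close>
definition pinv :: "complex fls fps \<Rightarrow> (int \<Rightarrow> int \<Rightarrow> complex) \<Rightarrow> int \<Rightarrow> int \<Rightarrow> complex" where
  "pinv \<phi> p l q = fls_nth (fls_nth (inverse (fps_to_fls (to_flsfps (substC \<phi> p)))) l) q"

definition qc_witness :: "(complex \<Rightarrow> 'w::ab_group_add \<Rightarrow> 'w) \<Rightarrow> complex fls fps
    \<Rightarrow> (int \<Rightarrow> 'w \<Rightarrow> 'w) \<Rightarrow> (int \<Rightarrow> 'w \<Rightarrow> 'w) \<Rightarrow> (int \<Rightarrow> int \<Rightarrow> complex) \<Rightarrow> bool" where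
  "qc_witness sc \<phi> a b p \<longleftrightarrow> pow2 p \<and> (\<exists>k q. substC \<phi> p k q \<noteq> 0)
      \<and> trunc2 (mult2 sc p (prod12 a b))"

definition quasi_compat :: "(complex \<Rightarrow> 'w::ab_group_add \<Rightarrow> 'w) \<Rightarrow> complex fls fps
    \<Rightarrow> (int \<Rightarrow> 'w \<Rightarrow> 'w) \<Rightarrow> (int \<Rightarrow> 'w \<Rightarrow> 'w) \<Rightarrow> bool" where
  "quasi_compat sc \<phi> a b \<longleftrightarrow> (\<exists>p. qc_witness sc \<phi> a b p)"

text \<open>Y^phi_E(a(x),z) b(x) for a given witness p\<close>
definition Yp :: "(complex \<Rightarrow> 'w::ab_group_add \<Rightarrow> 'w) \<Rightarrow> complex fls fps \<Rightarrow> (int \<Rightarrow> int \<Rightarrow> complex)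
    \<Rightarrow> (int \<Rightarrow> 'w \<Rightarrow> 'w) \<Rightarrow> (int \<Rightarrow> 'w \<Rightarrow> 'w) \<Rightarrow> int \<Rightarrow> int \<Rightarrow> 'w \<Rightarrow> 'w" where
  "Yp sc \<phi> p a b = multZ sc (pinv \<phi> p) (substW sc \<phi> (mult2 sc p (prod12 a b)))"

definition YE :: "(complex \<Rightarrow> 'w::ab_group_add \<Rightarrow> 'w) \<Rightarrow> complex fls fps
    \<Rightarrow> (int \<Rightarrow> 'w \<Rightarrow> 'w) \<Rightarrow> (int \<Rightarrow> 'w \<Rightarrow> 'w) \<Rightarrow> int \<Rightarrow> int \<Rightarrow> 'w \<Rightarrow> 'w" where
  "YE sc \<phi> a b = Yp sc \<phi> (SOME p. qc_witness sc \<phi> a b p) a b"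

end

theory Submission
  imports Defs
begin


lemma fsum_eq:
  assumes "finite S" "\<And>x. x \<notin> S \<Longrightarrow> f x = 0"
  shows "fsum f = sum f S"
  unfolding fsum_def
  by (rule sum.mono_neutral_left) (use assms in auto)

lemma fsum_nonzero: "fsum f \<noteq> 0 \<Longrightarrow> \<exists>x. f x \<noteq> 0"
  unfolding fsum_def by (metis (mono_tags, lifting) mem_Collect_eq sum.neutral)

lemma fsum_zero: "(\<And>x. f x = 0) \<Longrightarrow> fsum f = 0"
  using fsum_nonzero by blast

lemma fsum_single:
  assumes "\<And>x. x \<noteq> a \<Longrightarrow> f x = 0"
  shows "fsum f = f a"
  using fsum_eq[of "{a}" f] assms by auto

lemma fsum_bij:
  assumes "bij h"
  shows "fsum (\<lambda>x. f (h x)) = fsum f"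
proof -
  have e: "{x. f (h x) \<noteq> 0} = h -` {y. f y \<noteq> 0}" by auto
  have bb: "bij_betw h (h -` {y. f y \<noteq> 0}) {y. f y \<noteq> 0}"
    using assms by (auto simp: bij_betw_def bij_def inj_on_def intro: inj_on_subset)
  show ?thesis unfolding fsum_def e
    using sum.reindex_bij_betw[OF bb, of f] by simp
qed

lemma fsum_fsum:
  assumes "finite {(x,y). G x y \<noteq> 0}"
  shows "fsum (\<lambda>x. fsum (\<lambda>y. G x y)) = fsum (\<lambda>z. G (fst z) (snd z))"
proof -
  let ?S = "{(x,y). G x y \<noteq> 0}"
  define A where "A = fst ` ?S"
  define B where "B = snd ` ?S"
  have fA: "finite A" "finite B" using assms by (auto simp: A_def B_def)
  have 1: "fsum (\<lambda>y. G x y) = sum (G x) B" for x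
    by (rule fsum_eq) (use fA in \<open>auto simp: B_def image_iff\<close>)
  have 2: "fsum (\<lambda>x. sum (G x) B) = sum (\<lambda>x. sum (G x) B) A"
    by (rule fsum_eq) (use fA in \<open>auto simp: A_def B_def image_iff intro!: sum.neutral\<close>)
  have 3: "fsum (\<lambda>z. G (fst z) (snd z)) = sum (\<lambda>z. G (fst z) (snd z)) (A \<times> B)"
    by (rule fsum_eq) (use fA in \<open>auto simp: A_def B_def image_iff\<close>)
  show ?thesis unfolding 1 2 3 sum.cartesian_product by (simp add: case_prod_beta')
qed

lemma finite_slice:
  assumes "finite {(x,y). G x y \<noteq> 0}"
  shows "finite {y. G x y \<noteq> 0}"
proof -
  have "{y. G x y \<noteq> 0} \<subseteq> snd ` {(x,y). G x y \<noteq> 0}" by (auto simp: image_iff)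
  thus ?thesis using assms finite_subset by blast
qed

lemma fsum_swap:
  assumes "finite {(x,y). G x y \<noteq> 0}"
  shows "fsum (\<lambda>x. fsum (\<lambda>y. G x y)) = fsum (\<lambda>y. fsum (\<lambda>x. G x y))"
proof -
  have f2: "finite {(y,x). G x y \<noteq> 0}"
  proof -
    have "{(y,x). G x y \<noteq> 0} = (\<lambda>(x,y). (y,x)) ` {(x,y). G x y \<noteq> 0}" by auto
    thus ?thesis using assms by simp
  qed
  have "fsum (\<lambda>x. fsum (\<lambda>y. G x y)) = fsum (\<lambda>z. G (fst z) (snd z))" by (rule fsum_fsum[OF assms])
  also have "\<dots> = fsum (\<lambda>z. G (snd z) (fst z))"
    using fsum_bij[of prod.swap "\<lambda>z. G (snd z) (fst z)"] by simp
  also have "\<dots> = fsum (\<lambda>y. fsum (\<lambda>x. G x y))" using fsum_fsum[OF f2] by simp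
  finally show ?thesis .
qed

lemma fsum_add:
  assumes "finite {x. f x \<noteq> 0}" "finite {x. g x \<noteq> 0}"
  shows "fsum (\<lambda>x. f x + g x) = fsum f + fsum g"
proof -
  let ?S = "{x. f x \<noteq> 0} \<union> {x. g x \<noteq> 0}"
  have "fsum (\<lambda>x. f x + g x) = sum (\<lambda>x. f x + g x) ?S" by (rule fsum_eq) (use assms in auto)
  moreover have "fsum f = sum f ?S" by (rule fsum_eq) (use assms in auto)
  moreover have "fsum g = sum g ?S" by (rule fsum_eq) (use assms in auto)
  ultimately show ?thesis by (simp add: sum.distrib)
qed

lemma fsum_sum:
  assumes "finite T" "\<And>t. t \<in> T \<Longrightarrow> finite {x. f t x \<noteq> 0}"
  shows "fsum (\<lambda>x. \<Sum>t\<in>T. f t x) = (\<Sum>t\<in>T. fsum (f t))"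
  using assms
proof (induction T rule: finite_induct)
  case empty then show ?case by (simp add: fsum_zero)
next
  case (insert t T)
  have fin: "finite {x. (\<Sum>t\<in>T. f t x) \<noteq> 0}"
  proof -
    have "{x. (\<Sum>t\<in>T. f t x) \<noteq> 0} \<subseteq> (\<Union>t\<in>T. {x. f t x \<noteq> 0})"
      by (auto intro: ccontr simp: sum.neutral)
    thus ?thesis using insert by (auto intro: finite_subset)
  qed
  have "fsum (\<lambda>x. \<Sum>t\<in>insert t T. f t x) = fsum (\<lambda>x. f t x + (\<Sum>t\<in>T. f t x))"
    using insert by simp
  also have "\<dots> = fsum (f t) + fsum (\<lambda>x. \<Sum>t\<in>T. f t x)"
    by (rule fsum_add) (use insert fin in auto)
  finally show ?case using insert by simp
qed

lemma fsum_cmult: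
  fixes c :: "'a::field"
  shows "c * fsum f = fsum (\<lambda>x. c * f x)"
proof (cases "c = 0")
  case True then show ?thesis by (simp add: fsum_zero)
next
  case False
  have e: "{x. c * f x \<noteq> 0} = {x. f x \<noteq> 0}" using False by auto
  show ?thesis unfolding fsum_def e by (simp add: sum_distrib_left)
qed

lemma fsum_multc:
  fixes c :: "'a::field"
  shows "fsum f * c = fsum (\<lambda>x. f x * c)"
  using fsum_cmult[of c f] by (simp add: mult.commute)

context vector_space
begin

lemma fsum_scale_right: "scale c (fsum f) = fsum (\<lambda>x. scale c (f x))"
proof (cases "c = 0")
  case True then show ?thesis by (simp add: fsum_zero)
next
  case False
  have e: "{x. scale c (f x) \<noteq> 0} = {x. f x \<noteq> 0}" using False by auto
  show ?thesis unfolding fsum_def e by (simp add: scale_sum_right)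
qed

lemma fsum_scale_left: "scale (fsum f) v = fsum (\<lambda>x. scale (f x) v)"
proof (cases "v = 0")
  case True then show ?thesis by (simp add: fsum_zero)
next
  case False
  have e: "{x. scale (f x) v \<noteq> 0} = {x. f x \<noteq> 0}" using False by auto
  show ?thesis unfolding fsum_def e by (simp add: scale_sum_left)
qed

end



definition LZ :: "(int \<Rightarrow> int \<Rightarrow> 'a::zero) \<Rightarrow> bool" where
  "LZ c \<longleftrightarrow> (\<exists>K. \<forall>k q. k < K \<longrightarrow> c k q = 0) \<and> (\<forall>R. \<exists>L. \<forall>k q. k \<le> R \<longrightarrow> q < L \<longrightarrow> c k q = 0)"

lemma LZ_E:
  assumes "LZ c"
  obtains K L where "\<And>k q. k < K \<Longrightarrow> c k q = 0" "\<And>R k q. k \<le> R \<Longrightarrow> q < L R \<Longrightarrow> c k q = 0"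
proof -
  from assms obtain K where K: "\<forall>k q. k < K \<longrightarrow> c k q = 0" unfolding LZ_def by blast
  from assms have "\<forall>R. \<exists>L. \<forall>k q. k \<le> R \<longrightarrow> q < L \<longrightarrow> c k q = 0" unfolding LZ_def by blast
  then obtain L where "\<forall>R. \<forall>k q. k \<le> R \<longrightarrow> q < L R \<longrightarrow> c k q = 0" by metis
  with K that show ?thesis by blast
qed

lemma LZ_I:
  assumes "\<And>k q. k < K \<Longrightarrow> c k q = 0" "\<And>R k q. k \<le> R \<Longrightarrow> q < L R \<Longrightarrow> c k q = 0"
  shows "LZ c"
  unfolding LZ_def using assms by blast

definition convZ :: "(int \<Rightarrow> int \<Rightarrow> complex) \<Rightarrow> (int \<Rightarrow> int \<Rightarrow> complex) \<Rightarrow> int \<Rightarrow> int \<Rightarrow> complex" where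
  "convZ c d k p = fsum (\<lambda>(l, q). c l q * d (k - l) (p - q))"

definition cZ :: "'a::zero fls fls \<Rightarrow> int \<Rightarrow> int \<Rightarrow> 'a" where
  "cZ A k q = fls_nth (fls_nth A k) q"

lemma LZ_fin:
  fixes c :: "int \<Rightarrow> int \<Rightarrow> 'a::zero" and X :: "int \<Rightarrow> int \<Rightarrow> 'b::zero"
  assumes "LZ c" "LZ X"
  shows "finite {z. c (fst z) (snd z) \<noteq> 0 \<and> X (k - fst z) (p - snd z) \<noteq> 0}"
proof -
  obtain K1 L1 where c1: "\<And>k q. k < K1 \<Longrightarrow> c k q = 0" and c2: "\<And>R k q. k \<le> R \<Longrightarrow> q < L1 R \<Longrightarrow> c k q = 0"
    using LZ_E[OF assms(1)] by blast
  obtain K2 L2 where x1: "\<And>k q. k < K2 \<Longrightarrow> X k q = 0" and x2: "\<And>R k q. k \<le> R \<Longrightarrow> q < L2 R \<Longrightarrow> X k q = 0"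
    using LZ_E[OF assms(2)] by blast
  have "{z. c (fst z) (snd z) \<noteq> 0 \<and> X (k - fst z) (p - snd z) \<noteq> 0} \<subseteq> {K1..k-K2} \<times> {L1 (k-K2)..p - L2 (k-K1)}"
  proof
    fix z assume "z \<in> {z. c (fst z) (snd z) \<noteq> 0 \<and> X (k - fst z) (p - snd z) \<noteq> 0}"
    then have a: "c (fst z) (snd z) \<noteq> 0" and b: "X (k - fst z) (p - snd z) \<noteq> 0" by auto
    have "K1 \<le> fst z" using a c1 by (smt (verit))
    moreover have "K2 \<le> k - fst z" using b x1 by (smt (verit))
    moreover have "L1 (k-K2) \<le> snd z" using a c2[of "fst z" "k-K2"] \<open>K2 \<le> k - fst z\<close> by (smt (verit))
    moreover have "L2 (k-K1) \<le> p - snd z" using b x2[of "k - fst z" "k - K1"] \<open>K1 \<le> fst z\<close> by (smt (verit))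
    ultimately show "z \<in> {K1..k-K2} \<times> {L1 (k-K2)..p - L2 (k-K1)}" by (cases z) auto
  qed
  thus ?thesis by (rule finite_subset) simp
qed

lemma LZ_cZ: "LZ (cZ A)"
proof (rule LZ_I)
  show "k < fls_subdegree A \<Longrightarrow> cZ A k q = 0" for k q by (simp add: cZ_def)
  define L where "L R = Min (insert 0 ((\<lambda>k. fls_subdegree (fls_nth A k)) ` {fls_subdegree A..R}))" for R
  show "cZ A k q = 0" if "k \<le> R" "q < L R" for R k q
  proof (cases "k < fls_subdegree A")
    case True then show ?thesis by (simp add: cZ_def)
  next
    case False
    then have "fls_subdegree (fls_nth A k) \<in> insert 0 ((\<lambda>k. fls_subdegree (fls_nth A k)) ` {fls_subdegree A..R})"
      using that by auto
    then have "L R \<le> fls_subdegree (fls_nth A k)" unfolding L_def by (intro Min_le) auto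
    then show ?thesis using that by (simp add: cZ_def)
  qed
qed

lemma multZ_split: "multZ sc c S k p w = fsum (\<lambda>z. sc (c (fst z) (snd z)) (S (k - fst z) (p - snd z) w))"
  unfolding multZ_def by (simp add: case_prod_beta')

lemma convZ_split: "convZ c d k p = fsum (\<lambda>z. c (fst z) (snd z) * d (k - fst z) (p - snd z))"
  unfolding convZ_def by (simp add: case_prod_beta')

lemma multZ_fin:
  assumes vs: "vector_space sc" and "LZ c" "LZ (\<lambda>k p. X k p w)"
  shows "finite {z. sc (c (fst z) (snd z)) (X (k - fst z) (p - snd z) w) \<noteq> 0}"
proof -
  interpret v: vector_space sc by (rule vs)
  have "{z. sc (c (fst z) (snd z)) (X (k - fst z) (p - snd z) w) \<noteq> 0} \<subseteq>
        {z. c (fst z) (snd z) \<noteq> 0 \<and> (\<lambda>k p. X k p w) (k - fst z) (p - snd z) \<noteq> 0}" by auto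
  thus ?thesis using LZ_fin[OF assms(2,3)] finite_subset by blast
qed

lemma multZ_LZ:
  assumes vs: "vector_space sc" and c: "LZ c" and X: "LZ (\<lambda>k p. X k p w)"
  shows "LZ (\<lambda>k p. multZ sc c X k p w)"
proof -
  interpret v: vector_space sc by (rule vs)
  obtain K1 L1 where c1: "\<And>k q. k < K1 \<Longrightarrow> c k q = 0" and c2: "\<And>R k q. k \<le> R \<Longrightarrow> q < L1 R \<Longrightarrow> c k q = 0"
    using LZ_E[OF c] by blast
  obtain K2 L2 where x1: "\<And>k q. k < K2 \<Longrightarrow> X k q w = 0" and x2: "\<And>R k q. k \<le> R \<Longrightarrow> q < L2 R \<Longrightarrow> X k q w = 0"
    using LZ_E[OF X] by blast
  have nz: "\<exists>z. c (fst z) (snd z) \<noteq> 0 \<and> X (k - fst z) (p - snd z) w \<noteq> 0" if "multZ sc c X k p w \<noteq> 0" for k p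
    using fsum_nonzero[of "\<lambda>z. sc (c (fst z) (snd z)) (X (k - fst z) (p - snd z) w)"] that
    unfolding multZ_split by auto
  show ?thesis
  proof (rule LZ_I[where K="K1+K2" and L="\<lambda>R. L1 (R - K2) + L2 (R - K1)"])
    show "multZ sc c X k q w = 0" if "k < K1 + K2" for k q
    proof (rule ccontr)
      assume "multZ sc c X k q w \<noteq> 0"
      then obtain z where "c (fst z) (snd z) \<noteq> 0" "X (k - fst z) (q - snd z) w \<noteq> 0" using nz by blast
      then have "K1 \<le> fst z" "K2 \<le> k - fst z" using c1 x1 by (smt (verit))+
      then show False using that by simp
    qed
    show "multZ sc c X k q w = 0" if "k \<le> R" "q < L1 (R - K2) + L2 (R - K1)" for R k q
    proof (rule ccontr)
      assume "multZ sc c X k q w \<noteq> 0"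
      then obtain z where a: "c (fst z) (snd z) \<noteq> 0" and b: "X (k - fst z) (q - snd z) w \<noteq> 0" using nz by blast
      then have "K1 \<le> fst z" "K2 \<le> k - fst z" using c1 x1 by (smt (verit))+
      have "L1 (R - K2) \<le> snd z" using a c2[of "fst z" "R - K2"] \<open>K2 \<le> k - fst z\<close> that by (smt (verit))
      moreover have "L2 (R - K1) \<le> q - snd z" using b x2[of "k - fst z" "R - K1"] \<open>K1 \<le> fst z\<close> that by (smt (verit))
      ultimately show False using that by simp
    qed
  qed
qed

lemma multZ_assoc:
  assumes vs: "vector_space sc" and c: "LZ c" and d: "LZ d" and X: "\<And>w. LZ (\<lambda>k p. X k p w)"
  shows "multZ sc c (multZ sc d X) = multZ sc (convZ c d) X"
proof (intro ext)
  fix k p w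
  interpret v: vector_space sc by (rule vs)
  obtain K1 L1 where c1: "\<And>k q. k < K1 \<Longrightarrow> c k q = 0" and c2: "\<And>R k q. k \<le> R \<Longrightarrow> q < L1 R \<Longrightarrow> c k q = 0"
    using LZ_E[OF c] by blast
  obtain K2 L2 where d1: "\<And>k q. k < K2 \<Longrightarrow> d k q = 0" and d2: "\<And>R k q. k \<le> R \<Longrightarrow> q < L2 R \<Longrightarrow> d k q = 0"
    using LZ_E[OF d] by blast
  obtain K3 L3 where x1: "\<And>k q. k < K3 \<Longrightarrow> X k q w = 0" and x2: "\<And>R k q. k \<le> R \<Longrightarrow> q < L3 R \<Longrightarrow> X k q w = 0"
    using LZ_E[OF X[of w]] by blast
  define G where "G a b = sc (c (fst a) (snd a) * d (fst b) (snd b)) (X (k - fst a - fst b) (p - snd a - snd b) w)"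
    for a b :: "int \<times> int"
  have J: "finite {(a,b). G a b \<noteq> 0}"
  proof -
    have "{(a,b). G a b \<noteq> 0} \<subseteq> ({K1..k-K2-K3} \<times> {L1 (k-K2-K3)..p - L3 (k-K1-K2) - L2 (k-K1-K3)})
         \<times> ({K2..k-K1-K3} \<times> {L2 (k-K1-K3)..p - L3 (k-K1-K2) - L1 (k-K2-K3)})"
    proof (rule subsetI)
      fix z assume zin: "z \<in> {(a,b). G a b \<noteq> 0}"
      obtain a1 a2 b1 b2 where z: "z = ((a1,a2),(b1,b2))" by (metis prod.collapse)
      from zin have "G (a1,a2) (b1,b2) \<noteq> 0" by (simp add: z)
      then have a: "c a1 a2 \<noteq> 0" and b: "d b1 b2 \<noteq> 0" and x: "X (k - a1 - b1) (p - a2 - b2) w \<noteq> 0"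
        by (auto simp: G_def)
      have h1: "K1 \<le> a1" using a c1 by (smt (verit))
      have h2: "K2 \<le> b1" using b d1 by (smt (verit))
      have h3: "K3 \<le> k - a1 - b1" using x x1 by (smt (verit))
      have h4: "L1 (k-K2-K3) \<le> a2" using a c2[of a1 "k-K2-K3"] h2 h3 by (smt (verit))
      have h5: "L2 (k-K1-K3) \<le> b2" using b d2[of b1 "k-K1-K3"] h1 h3 by (smt (verit))
      have h6: "L3 (k-K1-K2) \<le> p - a2 - b2" using x x2[of "k - a1 - b1" "k-K1-K2"] h1 h2 by (smt (verit))
      show "z \<in> ({K1..k-K2-K3} \<times> {L1 (k-K2-K3)..p - L3 (k-K1-K2) - L2 (k-K1-K3)})
         \<times> ({K2..k-K1-K3} \<times> {L2 (k-K1-K3)..p - L3 (k-K1-K2) - L1 (k-K2-K3)})"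
        using h1 h2 h3 h4 h5 h6 by (simp add: z)
    qed
    thus ?thesis by (rule finite_subset) simp
  qed
  have L: "multZ sc c (multZ sc d X) k p w = fsum (\<lambda>a. fsum (\<lambda>b. G a b))"
    unfolding multZ_split v.fsum_scale_right G_def by (simp add: diff_diff_eq)
  have J2: "finite {(u,a). G a (fst u - fst a, snd u - snd a) \<noteq> 0}"
  proof -
    have "{(u,a). G a (fst u - fst a, snd u - snd a) \<noteq> 0} \<subseteq> (\<lambda>(a,b). ((fst a + fst b, snd a + snd b), a)) ` {(a,b). G a b \<noteq> 0}"
    proof (rule subsetI)
      fix z assume zin: "z \<in> {(u,a). G a (fst u - fst a, snd u - snd a) \<noteq> 0}"
      obtain u1 u2 a1 a2 where z: "z = ((u1,u2),(a1,a2))" by (metis prod.collapse)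
      have "z = (\<lambda>(a,b). ((fst a + fst b, snd a + snd b), a)) ((a1,a2),(u1-a1,u2-a2))" by (simp add: z)
      moreover have "((a1,a2),(u1-a1,u2-a2)) \<in> {(a,b). G a b \<noteq> 0}" using zin by (simp add: z)
      ultimately show "z \<in> (\<lambda>(a,b). ((fst a + fst b, snd a + snd b), a)) ` {(a,b). G a b \<noteq> 0}"
        by (rule image_eqI)
    qed
    thus ?thesis using J finite_subset by blast
  qed
  have "multZ sc (convZ c d) X k p w = fsum (\<lambda>u. fsum (\<lambda>a. G a (fst u - fst a, snd u - snd a)))"
    unfolding multZ_split convZ_split v.fsum_scale_left G_def by simp
  also have "\<dots> = fsum (\<lambda>a. fsum (\<lambda>u. G a (fst u - fst a, snd u - snd a)))"
    by (rule fsum_swap[OF J2])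
  also have "\<dots> = fsum (\<lambda>a. fsum (\<lambda>b. G a b))"
  proof (rule arg_cong[where f=fsum], rule ext)
    fix a
    have "bij (\<lambda>b::int\<times>int. (fst b + fst a, snd b + snd a))"
      by (rule bij_betw_byWitness[where f'="\<lambda>b. (fst b - fst a, snd b - snd a)"]) auto
    from fsum_bij[OF this, of "\<lambda>u. G a (fst u - fst a, snd u - snd a)"]
    show "fsum (\<lambda>u. G a (fst u - fst a, snd u - snd a)) = fsum (\<lambda>b. G a b)" by simp
  qed
  finally show "multZ sc c (multZ sc d X) k p w = multZ sc (convZ c d) X k p w" using L by simp
qed

lemma multZ_one:
  assumes vs: "vector_space sc"
  shows "multZ sc (cZ 1) X = X"
proof (intro ext)
  fix k p w
  interpret v: vector_space sc by (rule vs)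
  have "multZ sc (cZ 1) X k p w = (\<lambda>z. sc (cZ 1 (fst z) (snd z)) (X (k - fst z) (p - snd z) w)) (0,0)"
    unfolding multZ_split by (rule fsum_single) (auto simp: cZ_def)
  thus "multZ sc (cZ 1) X k p w = X k p w" by (simp add: cZ_def)
qed

lemma multZ_sum:
  assumes vs: "vector_space sc" and c: "LZ c" and fT: "finite T" and X: "\<And>t w. t \<in> T \<Longrightarrow> LZ (\<lambda>k p. X t k p w)"
  shows "multZ sc c (\<lambda>k p w. \<Sum>t\<in>T. X t k p w) k p w = (\<Sum>t\<in>T. multZ sc c (X t) k p w)"
proof -
  interpret v: vector_space sc by (rule vs)
  show ?thesis unfolding multZ_split v.scale_sum_right
    by (rule fsum_sum[OF fT]) (rule multZ_fin[OF vs c X])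
qed



definition sw :: "(int \<Rightarrow> int \<Rightarrow> 'a) \<Rightarrow> int \<Rightarrow> int \<Rightarrow> 'a" where "sw c a b = c b a"
definition swW :: "(int \<Rightarrow> int \<Rightarrow> 'w \<Rightarrow> 'v) \<Rightarrow> int \<Rightarrow> int \<Rightarrow> 'w \<Rightarrow> 'v" where "swW X a b w = X b a w"

definition DBg :: "(int \<Rightarrow> int \<Rightarrow> 'a::zero) \<Rightarrow> bool" where
  "DBg X \<longleftrightarrow> (\<exists>N. \<forall>m n. m < N \<or> n < N \<longrightarrow> X m n = 0)"

lemma DBg_LZ: "DBg X \<Longrightarrow> LZ X"
  unfolding DBg_def LZ_def by blast

lemma DBg_sw: "DBg X \<Longrightarrow> DBg (sw X)"
  unfolding DBg_def sw_def by blast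

lemma mult2_multZ: "mult2 = multZ"
  by (intro ext) (simp add: mult2_def multZ_def)

lemma multZ_swap: "multZ sc c X k p w = multZ sc (sw c) (swW X) p k w"
  unfolding multZ_split sw_def swW_def
  using fsum_bij[of prod.swap "\<lambda>z. sc (c (snd z) (fst z)) (X (k - snd z) (p - fst z) w)"] by simp

lemma convZ_swap: "convZ c d k p = convZ (sw c) (sw d) p k"
  unfolding convZ_split sw_def
  using fsum_bij[of prod.swap "\<lambda>z. c (snd z) (fst z) * d (k - snd z) (p - fst z)"] by simp

lemma swW_multZ: "swW (multZ sc d X) = multZ sc (sw d) (swW X)"
  by (intro ext) (simp add: swW_def multZ_swap[of sc d X])

lemma multZ_assoc_LL:
  assumes vs: "vector_space sc" and c: "LZ (sw c)" and d: "LZ (sw d)" and X: "\<And>w. LZ (\<lambda>k p. X p k w)"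
  shows "multZ sc c (multZ sc d X) = multZ sc (convZ c d) X"
proof (intro ext)
  fix k p w
  have X': "LZ (\<lambda>k p. swW X k p w)" for w using X[of w] by (simp add: swW_def)
  have "multZ sc c (multZ sc d X) k p w = multZ sc (sw c) (multZ sc (sw d) (swW X)) p k w"
    by (simp add: multZ_swap[of sc c] swW_multZ)
  also have "\<dots> = multZ sc (convZ (sw c) (sw d)) (swW X) p k w"
    by (simp add: multZ_assoc[OF vs c d X'])
  also have "convZ (sw c) (sw d) = sw (convZ c d)"
    by (intro ext) (simp add: sw_def convZ_swap[of c d])
  finally show "multZ sc c (multZ sc d X) k p w = multZ sc (convZ c d) X k p w"
    by (simp add: multZ_swap[of sc "convZ c d" X])
qed

lemma multZ_LZ_LL:
  assumes vs: "vector_space sc" and c: "LZ (sw c)" and X: "LZ (\<lambda>k p. X p k w)"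
  shows "LZ (\<lambda>k p. multZ sc c X p k w)"
proof -
  have X': "LZ (\<lambda>k p. swW X k p w)" using X by (simp add: swW_def)
  have "(\<lambda>k p. multZ sc c X p k w) = (\<lambda>k p. multZ sc (sw c) (swW X) k p w)"
    by (intro ext) (simp add: multZ_swap[of sc c X])
  thus ?thesis using multZ_LZ[OF vs c, of "swW X" w] X' by simp
qed

lemma multZ_sum_LL:
  assumes vs: "vector_space sc" and c: "LZ (sw c)" and fT: "finite T" and X: "\<And>t w. t \<in> T \<Longrightarrow> LZ (\<lambda>k p. X t p k w)"
  shows "multZ sc c (\<lambda>k p w. \<Sum>t\<in>T. X t k p w) k p w = (\<Sum>t\<in>T. multZ sc c (X t) k p w)"
proof -
  have X': "LZ (\<lambda>k p. swW (X t) k p w)" if "t \<in> T" for t w using X[OF that, of w] by (simp add: swW_def)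
  have e: "swW (\<lambda>k p w. \<Sum>t\<in>T. X t k p w) = (\<lambda>k p w. \<Sum>t\<in>T. swW (X t) k p w)"
    by (intro ext) (simp add: swW_def)
  have "multZ sc c (\<lambda>k p w. \<Sum>t\<in>T. X t k p w) k p w = multZ sc (sw c) (\<lambda>k p w. \<Sum>t\<in>T. swW (X t) k p w) p k w"
    by (simp add: multZ_swap[of sc c] e)
  also have "\<dots> = (\<Sum>t\<in>T. multZ sc (sw c) (swW (X t)) p k w)"
    by (rule multZ_sum[OF vs c fT X'])
  also have "\<dots> = (\<Sum>t\<in>T. multZ sc c (X t) k p w)"
    by (simp add: multZ_swap[of sc c])
  finally show ?thesis .
qed

lemma cZ_inj: "cZ A = cZ B \<Longrightarrow> A = B"
  unfolding cZ_def by (metis fls_eq_iff)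

lemma fls_times_fsum:
  fixes a b :: "'a::comm_ring_1 fls"
  shows "fls_nth (a * b) r = fsum (\<lambda>q. fls_nth a q * fls_nth b (r - q))"
proof -
  have "fsum (\<lambda>q. fls_nth a q * fls_nth b (r - q)) = (\<Sum>q=fls_subdegree a..r - fls_subdegree b. fls_nth a q * fls_nth b (r - q))"
    by (rule fsum_eq) auto
  thus ?thesis by (simp add: fls_times_nth(2))
qed

lemma convZ_cZ:
  fixes A B :: "complex fls fls"
  shows "convZ (cZ A) (cZ B) = cZ (A * B)"
proof (intro ext)
  fix k p
  let ?S = "{fls_subdegree A..k - fls_subdegree B}"
  have 1: "fls_nth (A * B) k = (\<Sum>l\<in>?S. fls_nth A l * fls_nth B (k - l))"
    by (simp add: fls_times_nth(2))
  have "cZ (A * B) k p = (\<Sum>l\<in>?S. fls_nth (fls_nth A l * fls_nth B (k - l)) p)"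
    by (simp add: cZ_def 1 fls_nth_sum)
  also have "\<dots> = fsum (\<lambda>l. fls_nth (fls_nth A l * fls_nth B (k - l)) p)"
    by (rule fsum_eq[symmetric]) auto
  also have "\<dots> = fsum (\<lambda>l. fsum (\<lambda>q. cZ A l q * cZ B (k - l) (p - q)))"
    by (simp add: fls_times_fsum cZ_def)
  also have "\<dots> = fsum (\<lambda>z. cZ A (fst z) (snd z) * cZ B (k - fst z) (p - snd z))"
  proof (rule fsum_fsum)
    have "{(l, q). cZ A l q * cZ B (k - l) (p - q) \<noteq> 0} \<subseteq> {z. cZ A (fst z) (snd z) \<noteq> 0 \<and> cZ B (k - fst z) (p - snd z) \<noteq> 0}"
      by auto
    thus "finite {(l, q). cZ A l q * cZ B (k - l) (p - q) \<noteq> 0}"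
      using LZ_fin[OF LZ_cZ LZ_cZ, of A B k p] finite_subset by blast
  qed
  finally show "convZ (cZ A) (cZ B) k p = cZ (A * B) k p" by (simp add: convZ_split)
qed

lemma cZ_to_flsfps:
  assumes neg: "\<And>k q. k < 0 \<Longrightarrow> c k q = 0" and L: "LZ c"
  shows "cZ (fps_to_fls (to_flsfps c)) = c"
proof (intro ext)
  fix k q
  obtain K L where c2: "\<And>R k q. k \<le> R \<Longrightarrow> q < L R \<Longrightarrow> c k q = 0" using LZ_E[OF L] by metis
  show "cZ (fps_to_fls (to_flsfps c)) k q = c k q"
  proof (cases "k < 0")
    case True then show ?thesis by (simp add: cZ_def neg)
  next
    case False
    have "fls_nth (Abs_fls (\<lambda>q. c k q)) q = c k q"
      by (rule nth_Abs_fls_ex_lower_bound) (use c2[of k k] in blast)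
    then show ?thesis using False by (simp add: cZ_def to_flsfps_def)
  qed
qed

lemma pinv_cZ: "pinv \<phi> p = cZ (inverse (fps_to_fls (to_flsfps (substC \<phi> p))))"
  by (intro ext) (simp add: pinv_def cZ_def)



lemma pow_inv_cancel:
  fixes u v :: "'a::comm_monoid_mult"
  assumes "v * u = 1"
  shows "u ^ A * v ^ B = (if B \<le> A then u ^ (A - B) else v ^ (B - A))"
proof (cases "B \<le> A")
  case True
  have "u ^ A = u ^ (A - B) * u ^ B" using True by (simp add: power_add[symmetric])
  then have "u ^ A * v ^ B = u ^ (A - B) * (u * v) ^ B"
    by (simp add: power_mult_distrib mult.assoc)
  also have "\<dots> = u ^ (A - B)" using assms by (simp add: mult.commute)
  finally show ?thesis using True by simp
next
  case False
  have "v ^ B = v ^ (B - A) * v ^ A" using False by (simp add: power_add[symmetric])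
  then have "u ^ A * v ^ B = v ^ (B - A) * (u * v) ^ A"
    by (simp add: power_mult_distrib mult.assoc mult.left_commute)
  also have "\<dots> = v ^ (B - A)" using assms by (simp add: mult.commute)
  finally show ?thesis using False by simp
qed

lemma powi_add_fps:
  fixes \<phi> :: "complex fls fps"
  assumes "fps_nth \<phi> 0 \<noteq> 0"
  shows "\<phi> powi (a + b) = \<phi> powi a * \<phi> powi b"
proof -
  have inv: "inverse \<phi> * \<phi> = 1" using assms by (rule inverse_mult_eq_1)
  have c: "\<phi> * inverse \<phi> = 1" using inv by (simp add: mult.commute)
  show ?thesis
  proof (cases "0 \<le> a")
    case a: True
    show ?thesis
    proof (cases "0 \<le> b")
      case True then show ?thesis using a by (simp add: power_int_def nat_add_distrib power_add)
    next
      case False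
      have "\<phi> ^ nat a * inverse \<phi> ^ nat (-b) = (if nat (-b) \<le> nat a then \<phi> ^ (nat a - nat (-b)) else inverse \<phi> ^ (nat (-b) - nat a))"
        by (rule pow_inv_cancel[OF inv])
      moreover have "nat a - nat (-b) = nat (a + b)" "nat (-b) - nat a = nat (-(a+b))" using False a by auto
      ultimately show ?thesis using a False by (auto simp: power_int_def)
    qed
  next
    case a: False
    show ?thesis
    proof (cases "0 \<le> b")
      case True
      have "\<phi> ^ nat b * inverse \<phi> ^ nat (-a) = (if nat (-a) \<le> nat b then \<phi> ^ (nat b - nat (-a)) else inverse \<phi> ^ (nat (-a) - nat b))"
        by (rule pow_inv_cancel[OF inv])
      moreover have "nat b - nat (-a) = nat (a + b)" "nat (-a) - nat b = nat (-(a+b))" using True a by auto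
      ultimately show ?thesis using a True by (auto simp: power_int_def mult.commute)
    next
      case False
      have "nat (-(a+b)) = nat (-a) + nat (-b)" using False a by auto
      then show ?thesis using a False by (simp add: power_int_def power_add)
    qed
  qed
qed

definition SB :: "nat \<Rightarrow> int \<Rightarrow> int \<Rightarrow> complex fls fps \<Rightarrow> bool" where
  "SB K M d F \<longleftrightarrow> (\<forall>l\<le>K. \<forall>r. r < d - M * int l \<longrightarrow> fls_nth (fps_nth F l) r = 0)"

lemma SB_mult:
  assumes "SB K M d F" "SB K M e G"
  shows "SB K M (d + e) (F * G)"
  unfolding SB_def
proof (intro allI impI)
  fix l r assume l: "l \<le> K" and r: "r < d + e - M * int l"
  have "fls_nth (fps_nth (F * G) l) r = (\<Sum>t=0..l. fls_nth (fps_nth F t * fps_nth G (l - t)) r)"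
    by (simp add: fps_mult_nth fls_nth_sum)
  also have "\<dots> = 0"
  proof (rule sum.neutral, rule ballI)
    fix t assume t: "t \<in> {0..l}"
    show "fls_nth (fps_nth F t * fps_nth G (l - t)) r = 0"
      unfolding fls_times_fsum
    proof (rule fsum_zero)
      fix q
      show "fls_nth (fps_nth F t) q * fls_nth (fps_nth G (l - t)) (r - q) = 0"
      proof (cases "q < d - M * int t")
        case True then show ?thesis using assms(1) t l unfolding SB_def by auto
      next
        case False
        have "int (l - t) = int l - int t" using t by auto
        then have "r - q < e - M * int (l - t)" using False r by (simp add: algebra_simps)
        then show ?thesis using assms(2) t l unfolding SB_def by auto
      qed
    qed
  qed
  finally show "fls_nth (fps_nth (F * G) l) r = 0" .
qed

lemma SB_one: "SB K M 0 1"
  unfolding SB_def by (auto simp: fps_one_nth)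

lemma SB_pow: "SB K M d F \<Longrightarrow> SB K M (int n * d) (F ^ n)"
proof (induction n)
  case 0 then show ?case using SB_one by simp
next
  case (Suc n)
  then have "SB K M (d + int n * d) (F * F ^ n)" by (intro SB_mult)
  then show ?case by (simp add: algebra_simps)
qed

lemma fls_times_X_shift:
  fixes a :: "complex fls"
  shows "fls_nth (a * fls_X) (r + 1) = fls_nth a r"
proof -
  have "fls_nth (a * fls_X) (r + 1) = (\<lambda>q. fls_nth a q * fls_nth fls_X (r + 1 - q)) r"
    unfolding fls_times_fsum by (rule fsum_single) auto
  thus ?thesis by simp
qed

lemma phipow_bound:
  fixes \<phi> :: "complex fls fps"
  assumes X: "fps_nth \<phi> 0 = fls_X"
  shows "\<exists>c. \<forall>m l r. l \<le> K \<longrightarrow> r < m - c \<longrightarrow> phipow \<phi> m l r = 0"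
proof -
  define M :: int where "M = Max (insert 0 ((\<lambda>l. 1 - fls_subdegree (fps_nth \<phi> l)) ` {1..K}))"
  have M0: "0 \<le> M" unfolding M_def by (intro Max_ge) auto
  have Ml: "1 - fls_subdegree (fps_nth \<phi> l) \<le> M" if "1 \<le> l" "l \<le> K" for l
    unfolding M_def using that by (intro Max_ge) auto
  have S1: "SB K M 1 \<phi>"
    unfolding SB_def
  proof (intro allI impI)
    fix l r assume l: "l \<le> K" and r: "r < 1 - M * int l"
    show "fls_nth (fps_nth \<phi> l) r = 0"
    proof (cases "l = 0")
      case True then show ?thesis using r X by simp
    next
      case False
      then have "M \<le> M * int l" using M0 by (simp add: mult_le_cancel_left1)
      then have "r < fls_subdegree (fps_nth \<phi> l)" using Ml[of l] False l r by simp
      then show ?thesis by simp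
    qed
  qed
  define \<psi> where "\<psi> = inverse \<phi>"
  have inv: "\<psi> * \<phi> = 1" unfolding \<psi>_def by (rule inverse_mult_eq_1) (simp add: X)
  have Sinv: "SB K M (-1) \<psi>"
    unfolding SB_def
  proof (intro allI impI)
    fix l r
    show "l \<le> K \<Longrightarrow> r < - 1 - M * int l \<Longrightarrow> fls_nth (fps_nth \<psi> l) r = 0"
    proof (induction l arbitrary: r rule: less_induct)
      case (less l)
      have coef: "(\<Sum>t=0..l. fps_nth \<psi> t * fps_nth \<phi> (l - t)) = (if l = 0 then 1 else 0)"
        using arg_cong[OF inv, of "\<lambda>F. fps_nth F l"] by (simp add: fps_mult_nth)
      have split: "(\<Sum>t=0..l. fps_nth \<psi> t * fps_nth \<phi> (l - t)) = (\<Sum>t<l. fps_nth \<psi> t * fps_nth \<phi> (l - t)) + fps_nth \<psi> l * fls_X"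
        using X by (simp add: atLeast0AtMost lessThan_Suc_atMost[symmetric])
      have e: "fps_nth \<psi> l * fls_X = (if l = 0 then 1 else 0) - (\<Sum>t<l. fps_nth \<psi> t * fps_nth \<phi> (l - t))"
        using coef split by (simp add: algebra_simps)
      have "fls_nth (fps_nth \<psi> l) r = fls_nth (fps_nth \<psi> l * fls_X) (r + 1)"
        by (simp add: fls_times_X_shift)
      also have "\<dots> = fls_nth (if l = 0 then 1 else 0) (r + 1) - (\<Sum>t<l. fls_nth (fps_nth \<psi> t * fps_nth \<phi> (l - t)) (r + 1))"
        unfolding e by (simp add: fls_nth_sum)
      also have "\<dots> = 0"
      proof -
        have a: "fls_nth (if l = 0 then 1 else 0) (r + 1) = (0::complex)"
        proof -
          have "0 \<le> M * int l" using M0 by simp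
          then have "r + 1 \<noteq> 0" using less.prems by linarith
          then show ?thesis by simp
        qed
        have b: "fls_nth (fps_nth \<psi> t * fps_nth \<phi> (l - t)) (r + 1) = 0" if t: "t < l" for t
          unfolding fls_times_fsum
        proof (rule fsum_zero)
          fix q
          show "fls_nth (fps_nth \<psi> t) q * fls_nth (fps_nth \<phi> (l - t)) (r + 1 - q) = 0"
          proof (cases "q < - 1 - M * int t")
            case True then show ?thesis using less.IH[OF t, of q] t less.prems by simp
          next
            case False
            have "int (l - t) = int l - int t" using t by auto
            then have "r + 1 - q < 1 - M * int (l - t)" using False less.prems by (simp add: algebra_simps)
            then show ?thesis using S1 t less.prems unfolding SB_def by auto
          qed
        qed
        show ?thesis using a b by simp
      qed
      finally show ?case .
    qed
  qed
  have Spow: "SB K M m (\<phi> powi m)" for m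
  proof (cases "0 \<le> m")
    case True
    have "SB K M (int (nat m) * 1) (\<phi> ^ nat m)" by (rule SB_pow[OF S1])
    then show ?thesis using True by (simp add: power_int_def)
  next
    case False
    have "SB K M (int (nat (-m)) * (-1)) (\<psi> ^ nat (-m))" by (rule SB_pow[OF Sinv])
    then show ?thesis using False by (simp add: power_int_def \<psi>_def)
  qed
  show ?thesis
  proof (intro exI[of _ "M * int K"] allI impI)
    fix m l r assume l: "l \<le> K" and r: "r < m - M * int K"
    have "M * int l \<le> M * int K" using l M0 by (simp add: mult_left_mono)
    then have "r < m - M * int l" using r by simp
    then show "phipow \<phi> m l r = 0" using Spow[of m] l unfolding SB_def phipow_def by blast
  qed
qed



lemma PB_fun:
  fixes \<phi> :: "complex fls fps"
  assumes X: "fps_nth \<phi> 0 = fls_X"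
  obtains C where "\<And>K m l r. l \<le> K \<Longrightarrow> r < m - C K \<Longrightarrow> phipow \<phi> m l r = 0"
proof -
  have "\<forall>K. \<exists>c. \<forall>m l r. l \<le> K \<longrightarrow> r < m - c \<longrightarrow> phipow \<phi> m l r = 0"
    using phipow_bound[OF X] by blast
  then obtain C where "\<forall>K. \<forall>m l r. l \<le> K \<longrightarrow> r < m - C K \<longrightarrow> phipow \<phi> m l r = 0" by metis
  then show ?thesis using that by blast
qed

lemma DBg_E:
  assumes "DBg X"
  obtains N where "\<And>m n. m < N \<Longrightarrow> X m n = 0" "\<And>m n. n < N \<Longrightarrow> X m n = 0"
  using assms unfolding DBg_def by blast

lemma substW_split: "substW sc \<phi> F k p w = (if k < 0 then 0 else fsum (\<lambda>z. sc (phipow \<phi> (fst z) (nat k) (p - snd z)) (F (fst z) (snd z) w)))"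
  unfolding substW_def by (simp add: case_prod_beta')

lemma substC_split: "substC \<phi> g k p = (if k < 0 then 0 else fsum (\<lambda>z. phipow \<phi> (fst z) (nat k) (p - snd z) * g (fst z) (snd z)))"
  unfolding substC_def by (simp add: case_prod_beta')

lemma substC_substW: "substC \<phi> g k p = substW (*) \<phi> (\<lambda>m n w. g m n) k p w"
  unfolding substW_split substC_split by simp

lemma substW_fin:
  assumes vs: "vector_space sc" and X: "fps_nth \<phi> 0 = fls_X" and F: "DBg (\<lambda>m n. F m n w)"
  shows "finite {z. sc (phipow \<phi> (fst z) K (p - snd z)) (F (fst z) (snd z) w) \<noteq> 0}"
proof -
  interpret v: vector_space sc by (rule vs)
  obtain C where C: "\<And>K m l r. l \<le> K \<Longrightarrow> r < m - C K \<Longrightarrow> phipow \<phi> m l r = 0" using PB_fun[OF X] by blast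
  obtain N where N1: "\<And>m n. m < N \<Longrightarrow> F m n w = 0" and N2: "\<And>m n. n < N \<Longrightarrow> F m n w = 0"
    using DBg_E[OF F] by blast
  have "{z. sc (phipow \<phi> (fst z) K (p - snd z)) (F (fst z) (snd z) w) \<noteq> 0} \<subseteq> {N..p - N + C K} \<times> {N..p - N + C K}"
  proof (rule subsetI)
    fix z assume "z \<in> {z. sc (phipow \<phi> (fst z) K (p - snd z)) (F (fst z) (snd z) w) \<noteq> 0}"
    then have a: "phipow \<phi> (fst z) K (p - snd z) \<noteq> 0" and b: "F (fst z) (snd z) w \<noteq> 0" by auto
    have h1: "N \<le> fst z" "N \<le> snd z" using b N1 N2 by (smt (verit))+
    have h2: "fst z - C K \<le> p - snd z"
    proof (rule ccontr)
      assume "\<not> fst z - C K \<le> p - snd z"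
      then have "p - snd z < fst z - C K" by simp
      then show False using a C[of K K "p - snd z" "fst z"] by simp
    qed
    show "z \<in> {N..p - N + C K} \<times> {N..p - N + C K}" using h1 h2 by (cases z) auto
  qed
  thus ?thesis by (rule finite_subset) simp
qed

lemma substW_LZ:
  assumes vs: "vector_space sc" and X: "fps_nth \<phi> 0 = fls_X" and F: "DBg (\<lambda>m n. F m n w)"
  shows "LZ (\<lambda>k p. substW sc \<phi> F k p w)"
proof -
  interpret v: vector_space sc by (rule vs)
  obtain C where C: "\<And>K m l r. l \<le> K \<Longrightarrow> r < m - C K \<Longrightarrow> phipow \<phi> m l r = 0" using PB_fun[OF X] by blast
  obtain N where N1: "\<And>m n. m < N \<Longrightarrow> F m n w = 0" and N2: "\<And>m n. n < N \<Longrightarrow> F m n w = 0"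
    using DBg_E[OF F] by blast
  show ?thesis
  proof (rule LZ_I[where K=0 and L="\<lambda>R. 2 * N - C (nat R)"])
    show "substW sc \<phi> F k q w = 0" if "k < 0" for k q using that by (simp add: substW_split)
    show "substW sc \<phi> F k q w = 0" if "k \<le> R" "q < 2 * N - C (nat R)" for R k q
    proof (cases "k < 0")
      case True then show ?thesis by (simp add: substW_split)
    next
      case False
      have "fsum (\<lambda>z. sc (phipow \<phi> (fst z) (nat k) (q - snd z)) (F (fst z) (snd z) w)) = 0"
      proof (rule fsum_zero)
        fix z
        show "sc (phipow \<phi> (fst z) (nat k) (q - snd z)) (F (fst z) (snd z) w) = 0"
        proof (cases "F (fst z) (snd z) w = 0")
          case False
          then have "N \<le> fst z" "N \<le> snd z" using N1 N2 by (smt (verit))+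
          then have "q - snd z < fst z - C (nat R)" using that by simp
          moreover have "nat k \<le> nat R" using that by simp
          ultimately show ?thesis using C by simp
        qed simp
      qed
      then show ?thesis using False by (simp add: substW_split)
    qed
  qed
qed

lemma substW_sum:
  assumes vs: "vector_space sc" and X: "fps_nth \<phi> 0 = fls_X" and fT: "finite T"
    and F: "\<And>t w. t \<in> T \<Longrightarrow> DBg (\<lambda>m n. F t m n w)"
  shows "substW sc \<phi> (\<lambda>m n w. \<Sum>t\<in>T. F t m n w) k p w = (\<Sum>t\<in>T. substW sc \<phi> (F t) k p w)"
proof -
  interpret v: vector_space sc by (rule vs)
  show ?thesis unfolding substW_split v.scale_sum_right
    by (auto intro!: fsum_sum[OF fT] substW_fin[OF vs X F])
qed

lemma DBg_mult2:
  assumes vs: "vector_space sc" and f: "DBg f" and H: "DBg (\<lambda>m n. H m n w)"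
  shows "DBg (\<lambda>m n. mult2 sc f H m n w)"
proof -
  interpret v: vector_space sc by (rule vs)
  obtain N1 where f1: "\<And>m n. m < N1 \<Longrightarrow> f m n = 0" and f2: "\<And>m n. n < N1 \<Longrightarrow> f m n = 0"
    using DBg_E[OF f] by blast
  obtain N2 where h1: "\<And>m n. m < N2 \<Longrightarrow> H m n w = 0" and h2: "\<And>m n. n < N2 \<Longrightarrow> H m n w = 0"
    using DBg_E[OF H] by blast
  show ?thesis unfolding DBg_def
  proof (intro exI[of _ "N1 + N2"] allI impI)
    fix m n assume mn: "m < N1 + N2 \<or> n < N1 + N2"
    show "mult2 sc f H m n w = 0" unfolding mult2_multZ multZ_split
    proof (rule fsum_zero)
      fix z
      show "sc (f (fst z) (snd z)) (H (m - fst z) (n - snd z) w) = 0"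
      proof (cases "f (fst z) (snd z) = 0 \<or> H (m - fst z) (n - snd z) w = 0")
        case False
        then have "N1 \<le> fst z" "N1 \<le> snd z" "N2 \<le> m - fst z" "N2 \<le> n - snd z"
          using f1 f2 h1 h2 by (smt (verit))+
        then show ?thesis using mn by simp
      qed auto
    qed
  qed
qed



lemma phipow_add_expand:
  fixes \<phi> :: "complex fls fps"
  assumes X: "fps_nth \<phi> 0 = fls_X"
  shows "phipow \<phi> (a + b) K r = (\<Sum>t=0..K. fsum (\<lambda>q. phipow \<phi> a t q * phipow \<phi> b (K - t) (r - q)))"
proof -
  have "\<phi> powi (a + b) = \<phi> powi a * \<phi> powi b" by (rule powi_add_fps) (simp add: X)
  then show ?thesis unfolding phipow_def by (simp add: fps_mult_nth fls_nth_sum fls_times_fsum)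
qed

lemma PB_ge:
  assumes "\<And>K m l r. l \<le> K \<Longrightarrow> r < m - C K \<Longrightarrow> phipow \<phi> m l r = 0"
    and "phipow \<phi> m l r \<noteq> 0" "l \<le> K"
  shows "m - C K \<le> r"
  using assms by (meson not_le)

lemma subst_mult:
  assumes vs: "vector_space sc" and X: "fps_nth \<phi> 0 = fls_X" and f: "DBg f"
    and H: "\<And>w. DBg (\<lambda>m n. H m n w)"
  shows "substW sc \<phi> (mult2 sc f H) = multZ sc (substC \<phi> f) (substW sc \<phi> H)"
proof (intro ext)
  fix k p w
  interpret v: vector_space sc by (rule vs)
  obtain C where C: "\<And>K m l r. l \<le> K \<Longrightarrow> r < m - C K \<Longrightarrow> phipow \<phi> m l r = 0" using PB_fun[OF X] by blast
  obtain N1 where f1: "\<And>m n. m < N1 \<Longrightarrow> f m n = 0" and f2: "\<And>m n. n < N1 \<Longrightarrow> f m n = 0"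
    using DBg_E[OF f] by blast
  obtain N2 where h1: "\<And>m n. m < N2 \<Longrightarrow> H m n w = 0" and h2: "\<And>m n. n < N2 \<Longrightarrow> H m n w = 0"
    using DBg_E[OF H[of w]] by blast
  show "substW sc \<phi> (mult2 sc f H) k p w = multZ sc (substC \<phi> f) (substW sc \<phi> H) k p w"
  proof (cases "k < 0")
    case True
    have "multZ sc (substC \<phi> f) (substW sc \<phi> H) k p w = 0"
      unfolding multZ_split
    proof (rule fsum_zero)
      fix z
      show "sc (substC \<phi> f (fst z) (snd z)) (substW sc \<phi> H (k - fst z) (p - snd z) w) = 0"
        using True by (cases "fst z < 0") (auto simp: substC_split substW_split)
    qed
    then show ?thesis using True by (simp add: substW_split)
  next
    case False
    define K where "K = nat k"
    have kK: "k = int K" using False by (simp add: K_def)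
    define c where "c = C K"
    have Cb: "m - c \<le> r" if "phipow \<phi> m l r \<noteq> 0" "l \<le> K" for m l r
      unfolding c_def using PB_ge[of C \<phi>, OF C that] .
    define A where "A z y = sc (phipow \<phi> (fst z) K (p - snd z) * f (fst y) (snd y)) (H (fst z - fst y) (snd z - snd y) w)"
      for z y :: "int \<times> int"
    define B where "B y x = sc (phipow \<phi> (fst y + fst x) K (p - snd y - snd x) * f (fst y) (snd y)) (H (fst x) (snd x) w)"
      for y x :: "int \<times> int"
    define D where "D u y x = (if 0 \<le> fst u \<and> fst u \<le> k then sc (phipow \<phi> (fst y) (nat (fst u)) (snd u - snd y) * f (fst y) (snd y) * phipow \<phi> (fst x) (nat (k - fst u)) (p - snd u - snd x)) (H (fst x) (snd x) w) else 0)"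
      for u y x :: "int \<times> int"
    have L1: "substW sc \<phi> (mult2 sc f H) k p w = fsum (\<lambda>z. fsum (\<lambda>y. A z y))"
      using False unfolding substW_split mult2_multZ multZ_split v.fsum_scale_right A_def K_def by simp
    have L2: "finite {(z,y). A z y \<noteq> 0}"
    proof -
      have "{(z,y). A z y \<noteq> 0} \<subseteq> ({N1+N2..p-(N1+N2)+c} \<times> {N1+N2..p-(N1+N2)+c}) \<times> ({N1..p-(N1+N2)+c-N2} \<times> {N1..p-(N1+N2)+c-N2})"
      proof (rule subsetI)
        fix s assume sin: "s \<in> {(z,y). A z y \<noteq> 0}"
        obtain z1 z2 y1 y2 where s: "s = ((z1,z2),(y1,y2))" by (metis prod.collapse)
        from sin have Anz: "A (z1,z2) (y1,y2) \<noteq> 0" by (simp add: s)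
        have a: "phipow \<phi> z1 K (p - z2) \<noteq> 0" "f y1 y2 \<noteq> 0" "H (z1 - y1) (z2 - y2) w \<noteq> 0"
          using Anz by (auto simp: A_def)
        have b1: "N1 \<le> y1" "N1 \<le> y2" using a f1 f2 by (smt (verit))+
        have b2: "N2 \<le> z1 - y1" "N2 \<le> z2 - y2" using a h1 h2 by (smt (verit))+
        have b3: "z1 - c \<le> p - z2" using Cb[OF a(1)] by simp
        show "s \<in> ({N1+N2..p-(N1+N2)+c} \<times> {N1+N2..p-(N1+N2)+c}) \<times> ({N1..p-(N1+N2)+c-N2} \<times> {N1..p-(N1+N2)+c-N2})"
          using b1 b2 b3 by (simp add: s)
      qed
      thus ?thesis by (rule finite_subset) simp
    qed
    have L3: "fsum (\<lambda>z. fsum (\<lambda>y. A z y)) = fsum (\<lambda>y. fsum (\<lambda>x. B y x))"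
    proof -
      have "fsum (\<lambda>z. fsum (\<lambda>y. A z y)) = fsum (\<lambda>y. fsum (\<lambda>z. A z y))" by (rule fsum_swap[OF L2])
      also have "\<dots> = fsum (\<lambda>y. fsum (\<lambda>x. B y x))"
      proof (rule arg_cong[where f=fsum], rule ext)
        fix y :: "int \<times> int"
        have bij: "bij (\<lambda>x::int\<times>int. (fst x + fst y, snd x + snd y))"
          by (rule bij_betw_byWitness[where f'="\<lambda>b. (fst b - fst y, snd b - snd y)"]) auto
        have "fsum (\<lambda>x. A (fst x + fst y, snd x + snd y) y) = fsum (\<lambda>z. A z y)"
          using fsum_bij[OF bij, of "\<lambda>z. A z y"] by simp
        moreover have "A (fst x + fst y, snd x + snd y) y = B y x" for x
          unfolding A_def B_def by (simp add: algebra_simps)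
        ultimately show "fsum (\<lambda>z. A z y) = fsum (\<lambda>x. B y x)" by simp
      qed
      finally show ?thesis .
    qed
    have R1: "multZ sc (substC \<phi> f) (substW sc \<phi> H) k p w = fsum (\<lambda>u. fsum (\<lambda>y. fsum (\<lambda>x. D u y x)))"
      unfolding multZ_split
    proof (rule arg_cong[where f=fsum], rule ext)
      fix u :: "int \<times> int"
      show "sc (substC \<phi> f (fst u) (snd u)) (substW sc \<phi> H (k - fst u) (p - snd u) w) = fsum (\<lambda>y. fsum (\<lambda>x. D u y x))"
      proof (cases "0 \<le> fst u \<and> fst u \<le> k")
        case True
        have e1: "sc (substC \<phi> f (fst u) (snd u)) (substW sc \<phi> H (k - fst u) (p - snd u) w)
           = sc (fsum (\<lambda>z. phipow \<phi> (fst z) (nat (fst u)) (snd u - snd z) * f (fst z) (snd z)))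
              (fsum (\<lambda>z. sc (phipow \<phi> (fst z) (nat (k - fst u)) (p - snd u - snd z)) (H (fst z) (snd z) w)))"
          using True by (simp add: substC_split substW_split)
        show ?thesis unfolding e1 unfolding v.fsum_scale_left unfolding v.fsum_scale_right
          using True by (simp add: D_def mult.assoc)
      next
        case F: False
        have "D u y x = 0" for y x unfolding D_def by (rule if_not_P[OF F])
        moreover have "sc (substC \<phi> f (fst u) (snd u)) (substW sc \<phi> H (k - fst u) (p - snd u) w) = 0"
          using F by (cases "fst u < 0") (auto simp: substC_split substW_split)
        ultimately show ?thesis by (simp add: fsum_zero)
      qed
    qed
    define Uy where "Uy = p - 2 * N2 + 2 * c - N1"
    define Ux where "Ux = p - 2 * N1 + 2 * c - N2"
    have Big: "finite {(u,v). D u (fst v) (snd v) \<noteq> 0}"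
    proof -
      have "{(u,v). D u (fst v) (snd v) \<noteq> 0} \<subseteq> ({0..k} \<times> {2*N1 - c..p - 2*N2 + c}) \<times> (({N1..Uy} \<times> {N1..Uy}) \<times> ({N2..Ux} \<times> {N2..Ux}))"
      proof (rule subsetI)
        fix s assume sin: "s \<in> {(u,v). D u (fst v) (snd v) \<noteq> 0}"
        obtain u1 u2 y1 y2 x1 x2 where s: "s = ((u1,u2),((y1,y2),(x1,x2)))" by (metis prod.collapse)
        from sin have Dnz: "D (u1,u2) (y1,y2) (x1,x2) \<noteq> 0" by (simp add: s)
        have u: "0 \<le> u1" "u1 \<le> k" using Dnz by (auto simp: D_def split: if_splits)
        have a: "phipow \<phi> y1 (nat u1) (u2 - y2) \<noteq> 0" "f y1 y2 \<noteq> 0"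
          "phipow \<phi> x1 (nat (k - u1)) (p - u2 - x2) \<noteq> 0" "H x1 x2 w \<noteq> 0"
          using Dnz by (auto simp: D_def split: if_splits)
        have b1: "N1 \<le> y1" "N1 \<le> y2" using a f1 f2 by (smt (verit))+
        have b2: "N2 \<le> x1" "N2 \<le> x2" using a h1 h2 by (smt (verit))+
        have n1: "nat u1 \<le> K" "nat (k - u1) \<le> K" using u kK by auto
        have b3: "y1 - c \<le> u2 - y2" using Cb[OF a(1) n1(1)] .
        have b4: "x1 - c \<le> p - u2 - x2" using Cb[OF a(3) n1(2)] .
        show "s \<in> ({0..k} \<times> {2*N1 - c..p - 2*N2 + c}) \<times> (({N1..Uy} \<times> {N1..Uy}) \<times> ({N2..Ux} \<times> {N2..Ux}))"
          using u b1 b2 b3 b4 by (simp add: s Uy_def Ux_def)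
      qed
      thus ?thesis by (rule finite_subset) simp
    qed
    have R2: "fsum (\<lambda>u. fsum (\<lambda>y. fsum (\<lambda>x. D u y x))) = fsum (\<lambda>y. fsum (\<lambda>x. fsum (\<lambda>u. D u y x)))"
    proof -
      have "fsum (\<lambda>u. fsum (\<lambda>y. fsum (\<lambda>x. D u y x))) = fsum (\<lambda>u. fsum (\<lambda>v. D u (fst v) (snd v)))"
      proof (rule arg_cong[where f=fsum], rule ext)
        fix u
        have "finite {v. D u (fst v) (snd v) \<noteq> 0}" using finite_slice[OF Big] by simp
        moreover have "{(y,x). D u y x \<noteq> 0} = {v. D u (fst v) (snd v) \<noteq> 0}" by auto
        ultimately show "fsum (\<lambda>y. fsum (\<lambda>x. D u y x)) = fsum (\<lambda>v. D u (fst v) (snd v))"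
          using fsum_fsum[of "D u"] by simp
      qed
      also have "\<dots> = fsum (\<lambda>v. fsum (\<lambda>u. D u (fst v) (snd v)))" by (rule fsum_swap[OF Big])
      also have "\<dots> = fsum (\<lambda>y. fsum (\<lambda>x. fsum (\<lambda>u. D u y x)))"
      proof -
        have "{(y,x). fsum (\<lambda>u. D u y x) \<noteq> 0} \<subseteq> snd ` {(u,v). D u (fst v) (snd v) \<noteq> 0}"
        proof (rule subsetI)
          fix s assume "s \<in> {(y,x). fsum (\<lambda>u. D u y x) \<noteq> 0}"
          then obtain u where "D u (fst s) (snd s) \<noteq> 0" using fsum_nonzero by (cases s) fastforce
          then show "s \<in> snd ` {(u,v). D u (fst v) (snd v) \<noteq> 0}" by (intro image_eqI[of _ _ "(u,s)"]) auto
        qed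
        then have "finite {(y,x). fsum (\<lambda>u. D u y x) \<noteq> 0}" using Big finite_subset by blast
        from fsum_fsum[OF this] show ?thesis by simp
      qed
      finally show ?thesis .
    qed
    have P: "fsum (\<lambda>u. D u y x) = B y x" for y x
    proof -
      have fin2: "finite {(a,b). D (a,b) y x \<noteq> 0}"
      proof -
        have "{(a,b). D (a,b) y x \<noteq> 0} \<subseteq> fst ` {(u,v). D u (fst v) (snd v) \<noteq> 0}"
          by (auto intro!: image_eqI[of _ _ "(_, (y,x))"])
        thus ?thesis using Big finite_subset by blast
      qed
      have "fsum (\<lambda>u. D u y x) = fsum (\<lambda>a. fsum (\<lambda>b. D (a,b) y x))"
        using fsum_fsum[OF fin2] by simp
      also have "\<dots> = (\<Sum>a\<in>{0..k}. fsum (\<lambda>b. D (a,b) y x))"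
        by (rule fsum_eq) (auto simp: D_def fsum_zero)
      also have "\<dots> = (\<Sum>t\<in>{0..K}. fsum (\<lambda>b. D (int t,b) y x))"
      proof -
        have "{0..k} = int ` {0..K}" using kK by (simp add: image_int_atLeastAtMost)
        thus ?thesis by (simp add: sum.reindex)
      qed
      also have "\<dots> = (\<Sum>t\<in>{0..K}. sc (fsum (\<lambda>q. phipow \<phi> (fst y) t q * phipow \<phi> (fst x) (K - t) (p - snd y - snd x - q)) * f (fst y) (snd y)) (H (fst x) (snd x) w))"
      proof (rule sum.cong[OF refl])
        fix t assume t: "t \<in> {0..K}"
        have nt: "nat (k - int t) = K - t" using t kK by auto
        have nt2: "nat (int K - int t) = K - t" using t by auto
        have bij: "bij (\<lambda>q::int. q + snd y)"
          by (rule bij_betw_byWitness[where f'="\<lambda>b. b - snd y"]) auto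
        have "fsum (\<lambda>b. D (int t,b) y x) = fsum (\<lambda>q. D (int t, q + snd y) y x)"
          using fsum_bij[OF bij, of "\<lambda>b. D (int t,b) y x"] by simp
        also have "\<dots> = fsum (\<lambda>q. sc (phipow \<phi> (fst y) t q * phipow \<phi> (fst x) (K - t) (p - snd y - snd x - q) * f (fst y) (snd y)) (H (fst x) (snd x) w))"
          using t kK by (intro arg_cong[where f=fsum] ext) (simp add: D_def nt nt2 algebra_simps)
        also have "\<dots> = sc (fsum (\<lambda>q. phipow \<phi> (fst y) t q * phipow \<phi> (fst x) (K - t) (p - snd y - snd x - q)) * f (fst y) (snd y)) (H (fst x) (snd x) w)"
          by (simp add: v.fsum_scale_left fsum_multc)
        finally show "fsum (\<lambda>b. D (int t,b) y x) = sc (fsum (\<lambda>q. phipow \<phi> (fst y) t q * phipow \<phi> (fst x) (K - t) (p - snd y - snd x - q)) * f (fst y) (snd y)) (H (fst x) (snd x) w)" .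
      qed
      also have "\<dots> = sc ((\<Sum>t\<in>{0..K}. fsum (\<lambda>q. phipow \<phi> (fst y) t q * phipow \<phi> (fst x) (K - t) (p - snd y - snd x - q))) * f (fst y) (snd y)) (H (fst x) (snd x) w)"
        by (simp add: v.scale_sum_left sum_distrib_right)
      also have "\<dots> = B y x"
        unfolding B_def phipow_add_expand[OF X] by simp
      finally show ?thesis .
    qed
    show ?thesis using L1 L3 R1 R2 P by simp
  qed
qed



lemma vs_complex: "vector_space ((*) :: complex \<Rightarrow> complex \<Rightarrow> complex)"
  by unfold_locales (simp_all add: algebra_simps)

lemma convZ_mult2: "convZ f g m n = mult2 (*) f (\<lambda>m n w. g m n) m n w"
  unfolding mult2_multZ multZ_split convZ_split by simp

lemma DBg_convZ: "DBg f \<Longrightarrow> DBg g \<Longrightarrow> DBg (convZ f g)"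
  using DBg_mult2[OF vs_complex, of f "\<lambda>m n w. g m n" 0] by (simp add: convZ_mult2[symmetric])

lemma convZ_assoc:
  assumes "DBg f" "DBg g" "DBg h"
  shows "convZ f (convZ g h) = convZ (convZ f g) h"
proof -
  have m: "multZ (*) c (\<lambda>k p w. d k p) = (\<lambda>k p w. convZ c d k p)" for c d
    by (intro ext) (simp add: multZ_split convZ_split)
  have "multZ (*) f (multZ (*) g (\<lambda>k p w. h k p)) = multZ (*) (convZ f g) (\<lambda>k p w. h k p)"
    by (rule multZ_assoc[OF vs_complex]) (use assms in \<open>auto intro: DBg_LZ\<close>)
  then have eq: "(\<lambda>k p (w::complex). convZ f (convZ g h) k p) = (\<lambda>k p (w::complex). convZ (convZ f g) h k p)"
    by (simp add: m)
  show ?thesis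
  proof (intro ext)
    fix k p
    show "convZ f (convZ g h) k p = convZ (convZ f g) h k p"
      using arg_cong[OF eq, of "\<lambda>F. F k p 0"] by simp
  qed
qed

lemma convZ_comm: "convZ f g = convZ g f"
proof (intro ext)
  fix k p
  have bij: "bij (\<lambda>z::int\<times>int. (k - fst z, p - snd z))"
    by (rule bij_betw_byWitness[where f'="\<lambda>z. (k - fst z, p - snd z)"]) auto
  show "convZ f g k p = convZ g f k p"
    unfolding convZ_split using fsum_bij[OF bij, of "\<lambda>z. g (fst z) (snd z) * f (k - fst z) (p - snd z)"]
    by (simp add: mult.commute)
qed

definition sh :: "complex fls fps \<Rightarrow> (int \<Rightarrow> int \<Rightarrow> complex) \<Rightarrow> complex fls fls" where
  "sh \<phi> f = fps_to_fls (to_flsfps (substC \<phi> f))"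

lemma substC_LZ:
  assumes X: "fps_nth \<phi> 0 = fls_X" and f: "DBg f"
  shows "LZ (substC \<phi> f)"
proof -
  have "LZ (\<lambda>k p. substW (*) \<phi> (\<lambda>m n w. f m n) k p 0)"
    by (rule substW_LZ[OF vs_complex X]) (use f in simp)
  then show ?thesis by (simp add: substC_substW[symmetric])
qed

lemma substC_cZ:
  assumes X: "fps_nth \<phi> 0 = fls_X" and f: "DBg f"
  shows "substC \<phi> f = cZ (sh \<phi> f)"
  unfolding sh_def by (rule cZ_to_flsfps[symmetric]) (auto simp: substC_split intro: substC_LZ[OF X f])

lemma substC_convZ:
  assumes X: "fps_nth \<phi> 0 = fls_X" and f: "DBg f" and g: "DBg g"
  shows "substC \<phi> (convZ f g) = convZ (substC \<phi> f) (substC \<phi> g)"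
proof (intro ext)
  fix k p
  have "substW (*) \<phi> (mult2 (*) f (\<lambda>m n w. g m n)) = multZ (*) (substC \<phi> f) (substW (*) \<phi> (\<lambda>m n w. g m n))"
    by (rule subst_mult[OF vs_complex X f]) (use g in simp)
  moreover have e2: "mult2 (*) f (\<lambda>m n w. g m n) = (\<lambda>m n w. convZ f g m n)"
    by (intro ext) (rule convZ_mult2[symmetric])
  moreover have e3: "substW (*) \<phi> (\<lambda>m n w. g m n) = (\<lambda>k p w. substC \<phi> g k p)"
    by (intro ext) (rule substC_substW[symmetric])
  ultimately have "substW (*) \<phi> (\<lambda>m n w. convZ f g m n) = multZ (*) (substC \<phi> f) (\<lambda>k p w. substC \<phi> g k p)"
    by simp
  then have "substW (*) \<phi> (\<lambda>m n w. convZ f g m n) k p 0 = multZ (*) (substC \<phi> f) (\<lambda>k p w. substC \<phi> g k p) k p 0"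
    by simp
  then have "substC \<phi> (convZ f g) k p = multZ (*) (substC \<phi> f) (\<lambda>k p w. substC \<phi> g k p) k p 0"
    by (simp only: substC_substW[symmetric])
  then show "substC \<phi> (convZ f g) k p = convZ (substC \<phi> f) (substC \<phi> g) k p"
    by (simp add: multZ_split convZ_split)
qed

lemma sh_convZ:
  assumes X: "fps_nth \<phi> 0 = fls_X" and f: "DBg f" and g: "DBg g"
  shows "sh \<phi> (convZ f g) = sh \<phi> f * sh \<phi> g"
proof (rule cZ_inj)
  have "cZ (sh \<phi> (convZ f g)) = substC \<phi> (convZ f g)" using substC_cZ[OF X DBg_convZ[OF f g]] by simp
  also have "\<dots> = convZ (cZ (sh \<phi> f)) (cZ (sh \<phi> g))"
    using substC_convZ[OF X f g] substC_cZ[OF X f] substC_cZ[OF X g] by simp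
  also have "\<dots> = cZ (sh \<phi> f * sh \<phi> g)" by (rule convZ_cZ)
  finally show "cZ (sh \<phi> (convZ f g)) = cZ (sh \<phi> f * sh \<phi> g)" .
qed

definition dl :: "int \<Rightarrow> int \<Rightarrow> complex" where "dl m n = (if m = 0 \<and> n = 0 then 1 else 0)"

lemma DBg_dl: "DBg dl"
  unfolding DBg_def dl_def by (intro exI[of _ 0]) auto

lemma sh_dl:
  assumes X: "fps_nth \<phi> 0 = fls_X"
  shows "sh \<phi> dl = 1"
proof (rule cZ_inj)
  have "substC \<phi> dl k p = cZ 1 k p" for k p
  proof -
    have "fsum (\<lambda>z. phipow \<phi> (fst z) (nat k) (p - snd z) * dl (fst z) (snd z)) = (\<lambda>z. phipow \<phi> (fst z) (nat k) (p - snd z) * dl (fst z) (snd z)) (0,0)"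
      by (rule fsum_single) (auto simp: dl_def)
    then show ?thesis by (auto simp: substC_split cZ_def phipow_def dl_def)
  qed
  then show "cZ (sh \<phi> dl) = cZ 1" using substC_cZ[OF X DBg_dl] by auto
qed

fun Qp :: "(nat \<Rightarrow> int \<Rightarrow> int \<Rightarrow> complex) \<Rightarrow> nat \<Rightarrow> int \<Rightarrow> int \<Rightarrow> complex" where
  "Qp P 0 = dl"
| "Qp P (Suc j) = convZ (Qp P j) (P (Suc j))"

lemma Qp_props:
  assumes X: "fps_nth \<phi> 0 = fls_X"
    and P: "\<And>i. 1 \<le> i \<Longrightarrow> i \<le> n \<Longrightarrow> DBg (P i) \<and> sh \<phi> (P i) \<noteq> 0"
  shows "j \<le> n \<Longrightarrow> DBg (Qp P j) \<and> sh \<phi> (Qp P j) \<noteq> 0 \<and> (\<forall>i. 1 \<le> i \<and> i \<le> j \<longrightarrow> (\<exists>R. DBg R \<and> Qp P j = convZ R (P i)))"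
proof (induction j)
  case 0 then show ?case using DBg_dl sh_dl[OF X] by simp
next
  case (Suc j)
  then have IH: "DBg (Qp P j)" "sh \<phi> (Qp P j) \<noteq> 0" "\<forall>i. 1 \<le> i \<and> i \<le> j \<longrightarrow> (\<exists>R. DBg R \<and> Qp P j = convZ R (P i))"
    by auto
  have Pj: "DBg (P (Suc j))" "sh \<phi> (P (Suc j)) \<noteq> 0" using P[of "Suc j"] Suc.prems by auto
  have 1: "DBg (Qp P (Suc j))" using DBg_convZ[OF IH(1) Pj(1)] by simp
  have 2: "sh \<phi> (Qp P (Suc j)) \<noteq> 0" using sh_convZ[OF X IH(1) Pj(1)] IH(2) Pj(2) by simp
  have 3: "\<exists>R. DBg R \<and> Qp P (Suc j) = convZ R (P i)" if i: "1 \<le> i" "i \<le> Suc j" for i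
  proof (cases "i = Suc j")
    case True then show ?thesis using IH(1) by auto
  next
    case False
    then obtain R where R: "DBg R" "Qp P j = convZ R (P i)" using IH(3) i by fastforce
    have Pi: "DBg (P i)" using P[of i] i Suc.prems by auto
    have "Qp P (Suc j) = convZ (convZ R (P i)) (P (Suc j))" using R by simp
    also have "\<dots> = convZ R (convZ (P i) (P (Suc j)))" using convZ_assoc[OF R(1) Pi Pj(1)] by simp
    also have "\<dots> = convZ R (convZ (P (Suc j)) (P i))" by (simp add: convZ_comm[of "P i"])
    also have "\<dots> = convZ (convZ R (P (Suc j))) (P i)" using convZ_assoc[OF R(1) Pj(1) Pi] by simp
    finally show ?thesis using DBg_convZ[OF R(1) Pj(1)] by blast
  qed
  show ?case using 1 2 3 by blast
qed

lemma EW_LL: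
  assumes vs: "vector_space sc" and a: "EW sc a" and b: "EW sc b"
  shows "LZ (\<lambda>k p. prod12 a b p k w)"
proof -
  obtain N where N: "\<And>n. n < N \<Longrightarrow> b n w = 0" using b unfolding EW_def by blast
  have "\<forall>v. \<exists>M. \<forall>m<M. a m v = 0" using a unfolding EW_def by blast
  then obtain Ma where Ma: "\<And>v m. m < Ma v \<Longrightarrow> a m v = 0" by metis
  have a0: "a m 0 = 0" for m
  proof -
    have "a m (0 + 0) = a m 0 + a m 0" using a unfolding EW_def Vector_Spaces.linear_iff by blast
    then show ?thesis by simp
  qed
  show ?thesis
  proof (rule LZ_I[where K=N and L="\<lambda>R. Min (insert 0 ((\<lambda>n. Ma (b n w)) ` {N..R}))"])
    show "prod12 a b p k w = 0" if "k < N" for k p using that N a0 by (simp add: prod12_def)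
    show "prod12 a b p k w = 0" if "k \<le> R" "p < Min (insert 0 ((\<lambda>n. Ma (b n w)) ` {N..R}))" for R k p
    proof (cases "k < N")
      case True then show ?thesis using N a0 by (simp add: prod12_def)
    next
      case False
      then have "Min (insert 0 ((\<lambda>n. Ma (b n w)) ` {N..R})) \<le> Ma (b k w)" using that by (intro Min_le) auto
      then have "p < Ma (b k w)" using that(2) by linarith
      then show ?thesis using Ma by (simp add: prod12_def)
    qed
  qed
qed



theorem lemma4p6:
  fixes sc :: "complex \<Rightarrow> 'w::ab_group_add \<Rightarrow> 'w"
    and \<phi> :: "complex fls fps"
    and n :: nat
    and a b :: "nat \<Rightarrow> int \<Rightarrow> 'w \<Rightarrow> 'w"
    and g :: "nat \<Rightarrow> int \<Rightarrow> int \<Rightarrow> complex"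
  assumes "vector_space sc"
    and "associate \<phi>"
    and "\<forall>i\<in>{1..n}. EW sc (a i) \<and> EW sc (b i) \<and> quasi_compat sc \<phi> (a i) (b i)"
    and "\<forall>i\<in>{1..n}. laur2 (g i)"
    and "trunc2 (\<lambda>m k w. \<Sum>i=1..n. mult2 sc (g i) (prod12 (a i) (b i)) m k w)"
  shows "(\<lambda>k p w. \<Sum>i=1..n. multZ sc (substC \<phi> (g i)) (YE sc \<phi> (a i) (b i)) k p w)
       = substW sc \<phi> (\<lambda>m k w. \<Sum>i=1..n. mult2 sc (g i) (prod12 (a i) (b i)) m k w)"
proof -
  note vs = assms(1)
  interpret v: vector_space sc by (rule vs)
  have X: "fps_nth \<phi> 0 = fls_X" using assms(2) unfolding associate_def by blast
  define P where "P i = (SOME p. qc_witness sc \<phi> (a i) (b i) p)" for i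
  define A where "A i = prod12 (a i) (b i)" for i
  define T where "T = (\<lambda>m k w. \<Sum>i=1..n. mult2 sc (g i) (A i) m k w)"
  have TDB: "DBg (\<lambda>m n. T m n w)" for w
    using assms(5) unfolding trunc2_def DBg_def T_def A_def by blast
  have Pw: "qc_witness sc \<phi> (a i) (b i) (P i)" if "i \<in> {1..n}" for i
    using assms(3) that unfolding quasi_compat_def P_def by (metis someI_ex)
  have PDB: "DBg (P i)" if "i \<in> {1..n}" for i
    using Pw[OF that] unfolding qc_witness_def pow2_def DBg_def by (intro exI[of _ 0]) blast
  have Psh: "sh \<phi> (P i) \<noteq> 0" if "i \<in> {1..n}" for i
  proof
    assume "sh \<phi> (P i) = 0"
    then have "substC \<phi> (P i) = cZ 0" using substC_cZ[OF X PDB[OF that]] by simp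
    then show False using Pw[OF that] unfolding qc_witness_def by (auto simp: cZ_def)
  qed
  have HDB: "DBg (\<lambda>m n. mult2 sc (P i) (A i) m n w)" if "i \<in> {1..n}" for i w
    using Pw[OF that] unfolding qc_witness_def trunc2_def DBg_def A_def by blast
  have gDB: "DBg (g i)" if "i \<in> {1..n}" for i
    using assms(4) that unfolding laur2_def DBg_def by blast
  have ALL: "LZ (\<lambda>k p. A i p k w)" if "i \<in> {1..n}" for i w
    unfolding A_def by (rule EW_LL[OF vs]) (use assms(3) that in auto)
  have swLZ: "LZ (sw f)" if "DBg f" for f using DBg_LZ[OF DBg_sw[OF that]] .
  define Q where "Q = Qp P n"
  have Qp: "DBg Q \<and> sh \<phi> Q \<noteq> 0 \<and> (\<forall>i. 1 \<le> i \<and> i \<le> n \<longrightarrow> (\<exists>R. DBg R \<and> Q = convZ R (P i)))"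
    unfolding Q_def by (rule Qp_props[OF X, where n=n]) (use PDB Psh in auto)
  then have QDB: "DBg Q" and Qsh: "sh \<phi> Q \<noteq> 0" by auto
  define V where "V i = mult2 sc Q (mult2 sc (g i) (A i))" for i
  have key: "DBg (\<lambda>m n. V i m n w) \<and>
     multZ sc (substC \<phi> (g i)) (YE sc \<phi> (a i) (b i)) = multZ sc (cZ (inverse (sh \<phi> Q))) (substW sc \<phi> (V i))"
    if i: "i \<in> {1..n}" for i w
  proof -
    obtain R where RDB: "DBg R" and QR: "Q = convZ R (P i)" using Qp i by auto
    let ?H = "mult2 sc (P i) (A i)"
    have E1: "V i = mult2 sc (g i) (mult2 sc R ?H)"
    proof -
      have "mult2 sc R ?H = mult2 sc Q (A i)"
        unfolding mult2_multZ QR by (rule multZ_assoc_LL[OF vs swLZ[OF RDB] swLZ[OF PDB[OF i]] ALL[OF i]])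
      then have "mult2 sc (g i) (mult2 sc R ?H) = multZ sc (convZ (g i) Q) (A i)"
        unfolding mult2_multZ by (simp add: multZ_assoc_LL[OF vs swLZ[OF gDB[OF i]] swLZ[OF QDB] ALL[OF i]])
      moreover have "V i = multZ sc (convZ Q (g i)) (A i)"
        unfolding V_def mult2_multZ by (rule multZ_assoc_LL[OF vs swLZ[OF QDB] swLZ[OF gDB[OF i]] ALL[OF i]])
      ultimately show ?thesis by (simp add: convZ_comm)
    qed
    have RHDB: "DBg (\<lambda>m n. mult2 sc R ?H m n w)" for w
      by (rule DBg_mult2[OF vs RDB HDB[OF i]])
    have VDB: "DBg (\<lambda>m n. V i m n w)" unfolding E1 by (rule DBg_mult2[OF vs gDB[OF i] RHDB])
    let ?S = "substW sc \<phi> ?H"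
    have SLZ: "LZ (\<lambda>k p. ?S k p w)" for w by (rule substW_LZ[OF vs X HDB[OF i]])
    define sg where "sg = sh \<phi> (g i)"
    define sR where "sR = sh \<phi> R"
    define sP where "sP = sh \<phi> (P i)"
    have sQ: "sh \<phi> Q = sR * sP" unfolding QR sR_def sP_def by (rule sh_convZ[OF X RDB PDB[OF i]])
    have sPnz: "sP \<noteq> 0" using Psh[OF i] by (simp add: sP_def)
    have sRnz: "sR \<noteq> 0" using Qsh sQ by auto
    have lhs: "multZ sc (substC \<phi> (g i)) (YE sc \<phi> (a i) (b i)) = multZ sc (cZ (sg * inverse sP)) ?S"
    proof -
      have "YE sc \<phi> (a i) (b i) = multZ sc (cZ (inverse sP)) ?S"
        unfolding YE_def Yp_def P_def[symmetric] A_def[symmetric] pinv_cZ sP_def sh_def by simp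
      moreover have "substC \<phi> (g i) = cZ sg" unfolding sg_def by (rule substC_cZ[OF X gDB[OF i]])
      ultimately show ?thesis
        by (simp add: multZ_assoc[OF vs LZ_cZ LZ_cZ SLZ] convZ_cZ)
    qed
    have "substW sc \<phi> (V i) = multZ sc (cZ sg) (multZ sc (cZ sR) ?S)"
      unfolding E1 subst_mult[OF vs X gDB[OF i] RHDB] subst_mult[OF vs X RDB HDB[OF i]]
      by (simp add: substC_cZ[OF X gDB[OF i]] substC_cZ[OF X RDB] sg_def sR_def)
    also have "\<dots> = multZ sc (cZ (sg * sR)) ?S"
      by (simp add: multZ_assoc[OF vs LZ_cZ LZ_cZ SLZ] convZ_cZ)
    finally have "multZ sc (cZ (inverse (sh \<phi> Q))) (substW sc \<phi> (V i)) = multZ sc (cZ (inverse (sh \<phi> Q) * (sg * sR))) ?S"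
      by (simp add: multZ_assoc[OF vs LZ_cZ LZ_cZ SLZ] convZ_cZ)
    also have "inverse (sh \<phi> Q) * (sg * sR) = sg * inverse sP"
      using sRnz sPnz unfolding sQ by (simp add: field_simps)
    finally show ?thesis using lhs VDB by simp
  qed
  have VLZ: "LZ (\<lambda>k p. substW sc \<phi> (V i) k p w)" if "i \<in> {1..n}" for i w
    by (rule substW_LZ[OF vs X]) (use key[OF that] in blast)
  have gALZ: "LZ (\<lambda>k p. mult2 sc (g i) (A i) p k w)" if "i \<in> {1..n}" for i w
    unfolding mult2_multZ by (rule multZ_LZ_LL[OF vs swLZ[OF gDB[OF that]] ALL[OF that]])
  have sumV: "(\<lambda>m k w. \<Sum>i=1..n. V i m k w) = mult2 sc Q T"
  proof (intro ext)
    fix m k w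
    show "(\<Sum>i=1..n. V i m k w) = mult2 sc Q T m k w"
      unfolding T_def V_def mult2_multZ
      by (rule multZ_sum_LL[OF vs swLZ[OF QDB], symmetric]) (use gALZ[unfolded mult2_multZ] in auto)
  qed
  have "(\<lambda>k p w. \<Sum>i=1..n. multZ sc (substC \<phi> (g i)) (YE sc \<phi> (a i) (b i)) k p w)
      = (\<lambda>k p w. \<Sum>i=1..n. multZ sc (cZ (inverse (sh \<phi> Q))) (substW sc \<phi> (V i)) k p w)"
    by (intro ext sum.cong refl) (use key in auto)
  also have "\<dots> = multZ sc (cZ (inverse (sh \<phi> Q))) (\<lambda>k p w. \<Sum>i=1..n. substW sc \<phi> (V i) k p w)"
    by (intro ext multZ_sum[OF vs LZ_cZ, symmetric]) (use VLZ in auto)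
  also have "(\<lambda>k p w. \<Sum>i=1..n. substW sc \<phi> (V i) k p w) = substW sc \<phi> (\<lambda>m k w. \<Sum>i=1..n. V i m k w)"
    by (intro ext substW_sum[OF vs X, symmetric]) (use key in auto)
  also have "\<dots> = substW sc \<phi> (mult2 sc Q T)" unfolding sumV ..
  also have "\<dots> = multZ sc (cZ (sh \<phi> Q)) (substW sc \<phi> T)"
    using subst_mult[OF vs X QDB TDB] substC_cZ[OF X QDB] by simp
  also have "multZ sc (cZ (inverse (sh \<phi> Q))) \<dots> = multZ sc (cZ (inverse (sh \<phi> Q) * sh \<phi> Q)) (substW sc \<phi> T)"
    by (simp add: multZ_assoc[OF vs LZ_cZ LZ_cZ substW_LZ[OF vs X TDB]] convZ_cZ)
  also have "\<dots> = substW sc \<phi> T" using Qsh by (simp add: multZ_one[OF vs])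
  finally show ?thesis unfolding T_def A_def .
qed


end
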